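(* Let $a>0$, $\gamma\in(\tfrac12,1]$, and let $f$ be an $a$-periodic function with $f\in L_1(0,a)$ whose Fourier coefficients $f_n=\frac1a\int_0^af(x)e^{-2\pi inx/a}dx$ satisfy $\{f_n\}_{n\in\mathbb Z}\in l^1(\mathbb Z)$. Let $\xi\in\overline{\mathbb C_+}$ with $\frac{a\xi}{2\pi}\notin\mathbb Z$. Then for every $x\ge0$ the improper integral $\int_x^\infty\frac{e^{i\xi t}f(t)}{(t+1)^\gamma}dt$ exists and $$\Big|e^{-i\xi x}\int_x^\infty\frac{e^{i\xi t}f(t)}{(t+1)^\gamma}dt\Big|\le2\Big(\sum_{n=-\infty}^{+\infty}\frac{|f_n|}{|\xi+\frac{2\pi n}a|}\Big)\frac1{(x+1)^\gamma}.$$ *)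

theory Defs
  imports "HOL-Analysis.Analysis"
begin

definition fourier_coeff :: "real \<Rightarrow> (real \<Rightarrow> complex) \<Rightarrow> int \<Rightarrow> complex" where
  "fourier_coeff a f n =
     (1 / complex_of_real a) *
     integral {0..a} (\<lambda>t. f t * exp (- (2 * complex_of_real pi * \<i> * of_int n * complex_of_real t)
                                        / complex_of_real a))"

definition has_improper_integral_from :: "(real \<Rightarrow> complex) \<Rightarrow> real \<Rightarrow> complex \<Rightarrow> bool" where
  "has_improper_integral_from g x I \<longleftrightarrow>
     (\<forall>T\<ge>x. g integrable_on {x..T}) \<and> ((\<lambda>T. integral {x..T} g) \<longlongrightarrow> I) at_top"

end

theory Submission
  imports Defs "HOL-Library.Nat_Bijection"
begin

definition ee :: "real \<Rightarrow> int \<Rightarrow> real \<Rightarrow> complex" where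
  "ee a n t = exp (\<i> * of_real (2 * pi * of_int n * t / a))"

lemma exp_i_add: "exp (\<i> * of_real (x + y)) = exp (\<i> * of_real x) * exp (\<i> * of_real y)"
  by (simp add: exp_add[symmetric] algebra_simps)

lemma ee_mult: "ee a n t * ee a m t = ee a (n+m) t"
proof -
  have "2 * pi * of_int (n+m) * t / a = 2 * pi * of_int n * t / a + 2 * pi * of_int m * t / a"
    by (simp add: algebra_simps add_divide_distrib)
  then show ?thesis unfolding ee_def by (simp only: exp_i_add)
qed

lemma ee_0 [simp]: "ee a 0 t = 1"
  by (simp add: ee_def)

lemma norm_ee [simp]: "norm (ee a n t) = 1"
  unfolding ee_def by (rule norm_exp_i_times)

lemma cnj_ee: "cnj (ee a n t) = ee a (-n) t"
proof -
  have e: "cnj (exp (\<i> * of_real x)) = exp (\<i> * of_real (-x))" for x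
    by (subst exp_cnj) simp
  have "2 * pi * of_int (-n) * t / a = - (2 * pi * of_int n * t / a)" by simp
  then show ?thesis unfolding ee_def e by simp
qed

lemma ee_period:
  assumes "a \<noteq> 0" shows "ee a n (t + a) = ee a n t"
proof -
  have "2 * pi * of_int n * (t + a) / a = 2 * pi * of_int n * t / a + 2 * of_int n * pi"
    using assms by (simp add: field_simps)
  then have "ee a n (t + a) = ee a n t * exp (\<i> * of_real (2 * of_int n * pi))"
    unfolding ee_def by (simp only: exp_i_add)
  also have "exp (\<i> * of_real (2 * of_int n * pi)) = 1"
    using exp_integer_2pi[of "of_int n"] by (simp add: mult.commute)
  finally show ?thesis by simp
qed

lemma ee_has_vector_derivative:
  "(ee a n has_vector_derivative (\<i> * of_real (2 * pi * of_int n / a)) * ee a n t) (at t within S)"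
proof -
  define c where "c = \<i> * of_real (2 * pi * of_int n / a)"
  have e: "ee a n = (\<lambda>t. exp (c * of_real t))"
    unfolding ee_def c_def by (auto simp: algebra_simps)
  have "((\<lambda>z. exp (c * z)) has_field_derivative c * exp (c * of_real t)) (at (of_real t))"
    by (auto intro!: derivative_eq_intros)
  from has_vector_derivative_real_field[OF this, of S]
  show ?thesis unfolding e c_def by simp
qed

lemma ee_alt: "ee a n = (\<lambda>t. exp ((\<i> * of_real (2 * pi * of_int n / a)) * of_real t))"
  unfolding ee_def by (auto simp: algebra_simps)

lemma continuous_on_ee [continuous_intros]: "continuous_on S (ee a n)"
  unfolding ee_alt by (intro continuous_intros)

lemma ee_has_integral:
  assumes "a > 0"
  shows "(ee a n has_integral (if n = 0 then a else 0)) {0..a}"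
proof (cases "n = 0")
  case True
  have "ee a 0 = (\<lambda>_. 1)" by (rule ext) simp
  then show ?thesis using has_integral_const_real[of "1::complex" 0 a] assms True
    by (simp add: scaleR_conv_of_real)
next
  case False
  define w where "w = \<i> * of_real (2 * pi * of_int n / a)"
  have w0: "w \<noteq> 0" using False assms by (simp add: w_def)
  have "(ee a n has_integral (ee a n a / w - ee a n 0 / w)) {0..a}"
  proof (rule fundamental_theorem_of_calculus)
    show "0 \<le> a" using assms by simp
    fix x assume "x \<in> {0..a}"
    have "((\<lambda>t. ee a n t / w) has_vector_derivative (w * ee a n x) / w) (at x within {0..a})"
      unfolding w_def by (intro has_vector_derivative_divide ee_has_vector_derivative)
    then show "((\<lambda>t. ee a n t / w) has_vector_derivative ee a n x) (at x within {0..a})"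
      using w0 by (simp add: field_simps)
  qed
  moreover have "ee a n a = ee a n 0" using ee_period[of a n 0] assms by simp
  ultimately show ?thesis using False w0 by simp
qed

lemma ai_mult_cont:
  fixes h \<phi> :: "real \<Rightarrow> complex"
  assumes "h absolutely_integrable_on {s..t}" "continuous_on {s..t} \<phi>"
  shows "(\<lambda>x. \<phi> x * h x) absolutely_integrable_on {s..t}"
proof (rule absolutely_integrable_bounded_measurable_product[where h="(*)"])
  show "bilinear ((*) :: complex \<Rightarrow> _)" by (simp add: bilinear_times)
  show "\<phi> \<in> borel_measurable (lebesgue_on {s..t})"
    using assms(2) by (simp add: continuous_imp_measurable_on_sets_lebesgue)
  show "bounded (\<phi> ` {s..t})"
    using assms(2) compact_Icc compact_continuous_image compact_imp_bounded by blast
qed (use assms in auto)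

lemma series_has_integral:
  fixes F :: "nat \<Rightarrow> real \<Rightarrow> complex"
  assumes B: "summable B" and st: "s \<le> t"
    and bound: "\<And>m u. u \<in> {s..t} \<Longrightarrow> norm (F m u) \<le> B m"
    and cont: "\<And>m. continuous_on {s..t} (F m)"
  shows "(\<lambda>m. integral {s..t} (F m)) sums integral {s..t} (\<lambda>u. \<Sum>m. F m u)"
    and "(\<lambda>u. \<Sum>m. F m u) integrable_on {s..t}"
proof -
  have B0: "B m \<ge> 0" for m using bound[of s m] st by (meson atLeastAtMost_iff norm_ge_zero order.trans order_refl)
  have sF: "summable (\<lambda>m. F m u)" if "u \<in> {s..t}" for u
    by (rule summable_norm_cancel, rule summable_comparison_test[OF _ B]) (use bound that in auto)
  have i1: "(\<lambda>u. \<Sum>m<k. F m u) integrable_on {s..t}" for k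
    by (intro integrable_continuous_interval continuous_intros cont)
  have i2: "(\<lambda>_. suminf B) integrable_on {s..t}" by (rule integrable_continuous_interval) simp
  have i3: "norm (\<Sum>m<k. F m u) \<le> suminf B" if "u \<in> {s..t}" for k u
  proof -
    have "norm (\<Sum>m<k. F m u) \<le> (\<Sum>m<k. B m)"
      by (rule order.trans[OF norm_sum sum_mono]) (use bound that in auto)
    also have "\<dots> \<le> suminf B" using B B0 by (intro sum_le_suminf) auto
    finally show ?thesis .
  qed
  have i4: "(\<lambda>k. \<Sum>m<k. F m u) \<longlonglongrightarrow> (\<Sum>m. F m u)" if "u \<in> {s..t}" for u
    using sF[OF that] by (simp add: summable_LIMSEQ)
  note dc = dominated_convergence[OF i1 i2 i3 i4]
  show "(\<lambda>u. \<Sum>m. F m u) integrable_on {s..t}" by (rule dc)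
  have "integral {s..t} (\<lambda>u. \<Sum>m<k. F m u) = (\<Sum>m<k. integral {s..t} (F m))" for k
    by (rule integral_sum) (auto intro: integrable_continuous_interval cont)
  with dc(2) show "(\<lambda>m. integral {s..t} (F m)) sums integral {s..t} (\<lambda>u. \<Sum>m. F m u)"
    unfolding sums_def by simp
qed

locale L32 =
  fixes a \<gamma> :: real and f :: "real \<Rightarrow> complex" and \<xi> :: complex
  assumes a_pos: "a > 0"
    and gamma: "1/2 < \<gamma>" "\<gamma> \<le> 1"
    and periodic: "\<And>t. f (t + a) = f t"
    and L1: "f absolutely_integrable_on {0..a}"
    and l1_coeffs: "(\<lambda>n. norm (fourier_coeff a f n)) summable_on (UNIV :: int set)"
    and xi_upper: "Im \<xi> \<ge> 0"
    and xi_nonres: "complex_of_real a * \<xi> / (2 * complex_of_real pi) \<notin> \<int>"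
begin

definition c :: "nat \<Rightarrow> complex" where "c m = fourier_coeff a f (int_decode m)"

definition g :: "real \<Rightarrow> complex" where "g t = (\<Sum>m. c m * ee a (int_decode m) t)"

lemma fc_eq: "fourier_coeff a f n = (1/a) * integral {0..a} (\<lambda>t. f t * ee a (-n) t)"
  unfolding fourier_coeff_def ee_def by (simp add: algebra_simps)

lemma summable_c: "summable (\<lambda>m. norm (c m))"
proof -
  have "(\<lambda>m. norm (fourier_coeff a f (int_decode m))) summable_on UNIV"
    using summable_on_reindex_bij_betw[of int_decode UNIV UNIV "\<lambda>n. norm (fourier_coeff a f n)"]
      l1_coeffs bij_int_decode by (simp add: bij_betw_def)
  then show ?thesis unfolding c_def by (subst (asm) summable_on_UNIV_nonneg_real_iff) auto
qed

lemma summable_g: "summable (\<lambda>m. c m * ee a (int_decode m) t)"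
  by (rule summable_norm_cancel) (simp add: norm_mult summable_c)

lemma norm_g: "norm (g t) \<le> (\<Sum>m. norm (c m))"
proof -
  have "norm (g t) \<le> (\<Sum>m. norm (c m * ee a (int_decode m) t))"
    unfolding g_def by (rule summable_norm) (simp add: norm_mult summable_c)
  then show ?thesis by (simp add: norm_mult)
qed

lemma g_uniform: "uniform_limit S (\<lambda>k t. \<Sum>m<k. c m * ee a (int_decode m) t) g sequentially"
  unfolding g_def
  by (rule Weierstrass_m_test_ev[OF _ summable_c]) (simp add: norm_mult)

lemma continuous_g: "continuous_on S g"
  by (rule uniform_limit_theorem[OF _ g_uniform]) (auto intro!: always_eventually continuous_intros)

lemma g_period: "g (t + a) = g t"
  unfolding g_def using a_pos by (simp add: ee_period)

lemma g_coeff: "integral {0..a} (\<lambda>t. g t * ee a n t) = integral {0..a} (\<lambda>t. f t * ee a n t)"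
proof -
  define m0 where "m0 = int_encode (-n)"
  have gm: "g t * ee a n t = (\<Sum>m. c m * ee a (int_decode m + n) t)" for t
    unfolding g_def using summable_g
    by (simp add: suminf_mult2 ee_mult[symmetric] mult.assoc)
  have "(\<lambda>m. integral {0..a} (\<lambda>t. c m * ee a (int_decode m + n) t)) sums
        integral {0..a} (\<lambda>t. \<Sum>m. c m * ee a (int_decode m + n) t)"
    by (rule series_has_integral[where B="\<lambda>m. norm (c m)"])
       (use a_pos summable_c in \<open>auto simp: norm_mult intro!: continuous_intros\<close>)
  moreover have "integral {0..a} (\<lambda>t. c m * ee a (int_decode m + n) t) =
     (if m = m0 then c m0 * a else 0)" for m
  proof -
    have "integral {0..a} (\<lambda>t. c m * ee a (int_decode m + n) t) = c m * (if int_decode m + n = 0 then a else 0)"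
      using integral_unique[OF ee_has_integral[OF a_pos]] by simp
    moreover have "int_decode m + n = 0 \<longleftrightarrow> m = m0"
      unfolding m0_def by (metis add.commute add_eq_0_iff int_decode_inverse int_encode_inverse)
    ultimately show ?thesis by auto
  qed
  ultimately have "integral {0..a} (\<lambda>t. g t * ee a n t) = c m0 * a"
    using sums_single[of m0 "\<lambda>_. c m0 * a"] gm by (simp add: sums_iff)
  also have "\<dots> = integral {0..a} (\<lambda>t. f t * ee a n t)"
    unfolding c_def m0_def using a_pos by (simp add: fc_eq)
  finally show ?thesis .
qed


definition hh :: "real \<Rightarrow> complex" where "hh t = f t - g t"

lemma hh_ai: "hh absolutely_integrable_on {0..a}"
proof -
  have "g absolutely_integrable_on cbox 0 a"
    by (rule absolutely_integrable_continuous) (rule continuous_g)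
  then show ?thesis unfolding hh_def using L1 by (intro set_integral_diff(1)) auto
qed

lemma ai_integrable: "(F::real\<Rightarrow>complex) absolutely_integrable_on S \<Longrightarrow> F integrable_on S"
  by (simp add: absolutely_integrable_on_def)

lemma hh_mult_ai: "continuous_on {0..a} F \<Longrightarrow> (\<lambda>t. F t * hh t) absolutely_integrable_on {0..a}"
  by (rule ai_mult_cont[OF hh_ai])

lemma hh_coeff: "integral {0..a} (\<lambda>t. ee a n t * hh t) = 0"
proof -
  have i1: "(\<lambda>t. ee a n t * f t) integrable_on {0..a}"
    by (rule ai_integrable, rule ai_mult_cont[OF L1]) (intro continuous_intros)
  have i2: "(\<lambda>t. ee a n t * g t) integrable_on {0..a}"
    by (intro integrable_continuous_interval continuous_intros continuous_g)
  have "integral {0..a} (\<lambda>t. ee a n t * hh t) =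
        integral {0..a} (\<lambda>t. f t * ee a n t) - integral {0..a} (\<lambda>t. g t * ee a n t)"
    unfolding hh_def using integral_diff[OF i1 i2] by (simp add: algebra_simps)
  then show ?thesis by (simp add: g_coeff)
qed

end

inductive tp :: "real \<Rightarrow> (real \<Rightarrow> complex) \<Rightarrow> bool" for a where
  gen: "tp a (\<lambda>t. z * ee a n t)"
| add: "tp a F \<Longrightarrow> tp a G \<Longrightarrow> tp a (\<lambda>t. F t + G t)"

lemma tp_scale: "tp a F \<Longrightarrow> tp a (\<lambda>t. z * F t)"
proof (induction rule: tp.induct)
  case (gen w n)
  then show ?case using tp.gen[of a "z * w" n] by (simp add: mult.assoc)
next
  case (add F G)
  then show ?case using tp.add by (simp add: distrib_left)
qed

lemma tp_mult_ee: "tp a F \<Longrightarrow> tp a (\<lambda>t. F t * ee a m t)"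
proof (induction rule: tp.induct)
  case (gen w n)
  then show ?case using tp.gen[of a w "n + m"] by (simp add: mult.assoc ee_mult)
next
  case (add F G)
  then show ?case using tp.add by (simp add: distrib_right)
qed

lemma tp_mult: assumes "tp a G" "tp a F" shows "tp a (\<lambda>t. F t * G t)"
  using assms proof (induction G rule: tp.induct)
  case (gen w n)
  then show ?case using tp_scale[OF tp_mult_ee[OF gen(1)], of w] by (simp add: algebra_simps)
next
  case (add G1 G2)
  then show ?case using tp.add by (simp add: distrib_left)
qed

lemma tp_const: "tp a (\<lambda>t. z)"
  using tp.gen[of a z 0] by simp

lemma tp_cont: "tp a F \<Longrightarrow> continuous_on S F"
  by (induction rule: tp.induct) (auto intro!: continuous_intros)

lemma of_real_lin: "complex_of_real (Re z * A + Im z * B) = (of_real A / 2 - \<i> * of_real B / 2) * z + (of_real A / 2 + \<i> * of_real B / 2) * cnj z"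
  by (simp add: complex_eq_iff)

lemma rpf_tp: "real_polynomial_function p \<Longrightarrow> tp a (\<lambda>t. complex_of_real (p (ee a 1 t)))"
proof (induction rule: real_polynomial_function.induct)
  case (linear p)
  have pz: "p z = Re z * p 1 + Im z * p \<i>" for z
  proof -
    have "z = Re z *\<^sub>R 1 + Im z *\<^sub>R \<i>" by (simp add: complex_eq_iff)
    then have "p z = p (Re z *\<^sub>R 1 + Im z *\<^sub>R \<i>)" by simp
    also have "\<dots> = Re z * p 1 + Im z * p \<i>"
      using linear_add[OF bounded_linear.linear[OF linear]] linear_scale[OF bounded_linear.linear[OF linear]]
      by simp
    finally show ?thesis .
  qed
  have eq: "(\<lambda>t. complex_of_real (p (ee a 1 t))) =
    (\<lambda>t. (of_real (p 1) / 2 - \<i> * of_real (p \<i>) / 2) * ee a 1 t +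
         (of_real (p 1) / 2 + \<i> * of_real (p \<i>) / 2) * ee a (-1) t)"
  proof
    fix t
    show "complex_of_real (p (ee a 1 t)) = (of_real (p 1) / 2 - \<i> * of_real (p \<i>) / 2) * ee a 1 t +
         (of_real (p 1) / 2 + \<i> * of_real (p \<i>) / 2) * ee a (-1) t"
      by (simp only: pz[of "ee a 1 t"] of_real_lin cnj_ee)
  qed
  show ?case unfolding eq by (intro tp.add tp.gen)
next
  case (const c)
  then show ?case by (rule tp_const)
next
  case (add f g)
  then show ?case by (simp add: tp.add)
next
  case (mult f g)
  then show ?case by (simp add: tp_mult)
qed

context L32 begin

lemma tp_hh: "tp a F \<Longrightarrow> integral {0..a} (\<lambda>t. F t * hh t) = 0"
proof (induction rule: tp.induct)
  case (gen z n)
  have "integral {0..a} (\<lambda>t. z * ee a n t * hh t) = z * integral {0..a} (\<lambda>t. ee a n t * hh t)"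
    by (simp add: mult.assoc integral_mult_right)
  then show ?case by (simp add: hh_coeff)
next
  case (add F G)
  have "(\<lambda>t. F t * hh t) integrable_on {0..a}" "(\<lambda>t. G t * hh t) integrable_on {0..a}"
    using add by (auto intro!: ai_integrable hh_mult_ai tp_cont)
  then show ?case using add by (simp add: distrib_right integral_add)
qed


lemma E_image: "ee a 1 ` {0..a} = sphere 0 1"
proof
  show "ee a 1 ` {0..a} \<subseteq> sphere 0 1" by auto
  show "sphere 0 1 \<subseteq> ee a 1 ` {0..a}"
  proof
    fix z :: complex assume z: "z \<in> sphere 0 1"
    then have nz: "norm z = 1" by simp
    define t where "t = a * Arg2pi z / (2 * pi)"
    have t: "t \<in> {0..a}" using a_pos Arg2pi_ge_0[of z] Arg2pi_lt_2pi[of z]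
      by (auto simp: t_def field_simps)
    have "2 * pi * of_int 1 * t / a = Arg2pi z" using a_pos by (simp add: t_def field_simps)
    then have "ee a 1 t = exp (\<i> * of_real (Arg2pi z))" by (simp add: ee_def)
    also have "\<dots> = z" using Arg2pi[of z] nz by (simp add: is_Arg_def)
    finally show "z \<in> ee a 1 ` {0..a}" using t by (metis image_eqI)
  qed
qed

lemma hh_cont_zero:
  fixes \<phi> :: "real \<Rightarrow> real"
  assumes cont: "continuous_on {0..a} \<phi>" and per: "\<phi> 0 = \<phi> a"
  shows "integral {0..a} (\<lambda>t. of_real (\<phi> t) * hh t) = 0"
proof -
  define E where "E = ee a 1"
  define \<Psi> where "\<Psi> z = \<phi> (a * Arg2pi z / (2 * pi))" for z
  have \<Psi>E: "\<Psi> (E t) = \<phi> t" if t: "t \<in> {0..a}" for t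
  proof (cases "t = a")
    case True
    have "E a = 1" using ee_period[of a 1 0] a_pos by (simp add: E_def ee_def)
    then show ?thesis using True per by (simp add: \<Psi>_def Arg2pi_of_real[of 1, simplified])
  next
    case False
    then have t': "0 \<le> t" "t < a" using t by auto
    have Et: "E t = exp (\<i> * of_real (2 * pi * t / a))" by (simp add: E_def ee_def)
    have A: "Arg2pi (exp (\<i> * of_real \<theta>)) = \<theta>" if "0 \<le> \<theta>" "\<theta> < 2*pi" for \<theta>
      using Arg2pi_exp[of "\<i> * of_real \<theta>"] that by simp
    moreover have "0 \<le> 2 * pi * t / a" "2 * pi * t / a < 2 * pi" using t' a_pos by (auto simp: field_simps)
    ultimately have "Arg2pi (exp (\<i> * of_real (2 * pi * t / a))) = 2 * pi * t / a" by blast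
    then show ?thesis using a_pos Et by (simp add: \<Psi>_def)
  qed
  have Eim: "E ` {0..a} = sphere 0 1" unfolding E_def by (rule E_image)
  have Econt: "continuous_on {0..a} E" unfolding E_def by (intro continuous_intros)
  have q: "quotient_map (top_of_set {0..a}) (top_of_set (sphere 0 1)) E"
    unfolding quotient_map_def
  proof (intro conjI allI impI)
    show "E ` topspace (top_of_set {0..a}) = topspace (top_of_set (sphere 0 1))"
      using Eim by simp
    fix U assume "U \<subseteq> topspace (top_of_set (sphere (0::complex) 1))"
    then have U: "U \<subseteq> sphere 0 1" by simp
    have "{x \<in> topspace (top_of_set {0..a}). E x \<in> U} = {0..a} \<inter> E -` U" by auto
    then show "openin (top_of_set {0..a}) {x \<in> topspace (top_of_set {0..a}). E x \<in> U} =
          openin (top_of_set (sphere 0 1)) U"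
      using Abstract_Topology_2.continuous_imp_quotient_map[OF Econt Eim compact_Icc U] by simp
  qed
  have "continuous_on {0..a} (\<Psi> \<circ> E)"
    using cont by (rule continuous_on_eq) (simp add: \<Psi>E)
  then have "continuous_map (top_of_set {0..a}) euclidean (\<Psi> \<circ> E)" by simp
  from continuous_compose_quotient_map[OF q this]
  have \<Psi>cont: "continuous_on (sphere 0 1) \<Psi>" by simp
  define I where "I = integral {0..a} (\<lambda>t. of_real (\<phi> t) * hh t)"
  define K where "K = integral {0..a} (\<lambda>t. norm (hh t))"
  have nhi: "(\<lambda>t. norm (hh t)) integrable_on {0..a}"
    using hh_ai by (simp add: absolutely_integrable_on_def)
  have K0: "K \<ge> 0" unfolding K_def by (rule integral_nonneg[OF nhi]) simp
  have bound: "norm I \<le> e * K" if e: "e > 0" for e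
  proof -
    obtain p where p: "real_polynomial_function p" "\<And>z. z \<in> sphere 0 1 \<Longrightarrow> \<bar>\<Psi> z - p z\<bar> < e"
      using Stone_Weierstrass_real_polynomial_function[OF compact_sphere \<Psi>cont e] by blast
    have tpp: "tp a (\<lambda>t. complex_of_real (p (E t)))" unfolding E_def by (rule rpf_tp[OF p(1)])
    have pcont: "continuous_on {0..a} (\<lambda>t. complex_of_real (p (E t)))" by (rule tp_cont[OF tpp])
    have z: "integral {0..a} (\<lambda>t. complex_of_real (p (E t)) * hh t) = 0"
      by (rule tp_hh[OF tpp])
    have i1: "(\<lambda>t. of_real (\<phi> t) * hh t) integrable_on {0..a}"
      by (intro ai_integrable hh_mult_ai continuous_intros cont)
    have i2: "(\<lambda>t. complex_of_real (p (E t)) * hh t) integrable_on {0..a}"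
      by (intro ai_integrable hh_mult_ai pcont)
    have "I = integral {0..a} (\<lambda>t. (of_real (\<phi> t) - complex_of_real (p (E t))) * hh t)"
      unfolding I_def using integral_diff[OF i1 i2] z by (simp add: algebra_simps)
    also have "norm \<dots> \<le> integral {0..a} (\<lambda>t. e * norm (hh t))"
    proof (rule integral_norm_bound_integral)
      show "(\<lambda>t. (of_real (\<phi> t) - complex_of_real (p (E t))) * hh t) integrable_on {0..a}"
        using integrable_diff[OF i1 i2] by (simp add: algebra_simps)
      show "(\<lambda>t. e * norm (hh t)) integrable_on {0..a}" using integrable_on_cmult_left[OF nhi, of e] by simp
      fix t assume t: "t \<in> {0..a}"
      have "\<bar>\<phi> t - p (E t)\<bar> \<le> e"
        using p(2)[of "E t"] \<Psi>E[OF t] Eim t by (metis image_eqI less_imp_le)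
      then have "norm (of_real (\<phi> t) - complex_of_real (p (E t))) \<le> e"
        by (metis norm_of_real of_real_diff)
      then show "norm ((of_real (\<phi> t) - complex_of_real (p (E t))) * hh t) \<le> e * norm (hh t)"
        by (simp add: norm_mult mult_right_mono)
    qed
    also have "\<dots> = e * K" unfolding K_def by simp
    finally show ?thesis .
  qed
  have "norm I = 0"
  proof (rule ccontr)
    assume "norm I \<noteq> 0"
    then have pos: "norm I > 0" by simp
    define e where "e = norm I / (2 * (K + 1))"
    have e: "e > 0" using pos K0 by (simp add: e_def)
    have "norm I \<le> e * K" by (rule bound[OF e])
    also have "\<dots> < norm I"
    proof -
      have r: "K / (2*(K+1)) < 1" using K0 by (simp add: field_simps)
      have "e * K = norm I * (K / (2*(K+1)))" unfolding e_def by simp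
      also have "\<dots> < norm I * 1" using r pos by (rule mult_strict_left_mono)
      finally show ?thesis by simp
    qed
    finally show False by simp
  qed
  then show ?thesis by (simp add: I_def)
qed


lemma mm0: "A \<le> 0 \<Longrightarrow> max 0 (min 1 (min A B)) = (0::real)"
  and mm1: "B \<le> 0 \<Longrightarrow> max 0 (min 1 (min A B)) = (0::real)"
  by (auto simp: max_def min_def)

lemma hh_interval_zero:
  assumes st: "0 \<le> s" "s \<le> t" "t \<le> a"
  shows "integral {s..t} hh = 0"
proof (cases "s = t")
  case True then show ?thesis by simp
next
  case False
  then have st': "s < t" using st by simp
  define \<phi> :: "nat \<Rightarrow> real \<Rightarrow> real" where
    "\<phi> k u = max 0 (min 1 (min (real (Suc k) * (u - s)) (real (Suc k) * (t - u))))" for k u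
  define G where "G u = (if u \<in> {s<..<t} then hh u else 0)" for u
  have phic: "continuous_on {0..a} (\<phi> k)" for k
    unfolding \<phi>_def by (intro continuous_intros)
  have phi0: "\<phi> k 0 = 0" "\<phi> k a = 0" for k
  proof -
    have "real (Suc k) * (0 - s) \<le> 0" using st by (intro mult_nonneg_nonpos) auto
    then show "\<phi> k 0 = 0" unfolding \<phi>_def by (rule mm0)
    have "real (Suc k) * (t - a) \<le> 0" using st by (intro mult_nonneg_nonpos) auto
    then show "\<phi> k a = 0" unfolding \<phi>_def by (rule mm1)
  qed
  have phib: "\<bar>\<phi> k u\<bar> \<le> 1" for k u unfolding \<phi>_def by auto
  have z: "integral {0..a} (\<lambda>u. of_real (\<phi> k u) * hh u) = 0" for k
    by (rule hh_cont_zero[OF phic]) (simp add: phi0)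
  have nhi: "(\<lambda>t. norm (hh t)) integrable_on {0..a}"
    using hh_ai by (simp add: absolutely_integrable_on_def)
  have lim: "(\<lambda>k. of_real (\<phi> k u) * hh u) \<longlonglongrightarrow> G u" if "u \<in> {0..a}" for u
  proof (cases "u \<in> {s<..<t}")
    case True
    then have d: "u - s > 0" "t - u > 0" by auto
    obtain N :: nat where N: "max (1 / (u - s)) (1 / (t - u)) < real N" using reals_Archimedean2 by blast
    have "eventually (\<lambda>k. of_real (\<phi> k u) * hh u = G u) sequentially"
      unfolding eventually_sequentially
    proof (intro exI allI impI)
      fix k assume "N \<le> k"
      then have "real N \<le> real (Suc k)" by simp
      with N have k1: "1 / (u - s) < real (Suc k)" "1 / (t - u) < real (Suc k)" by auto
      have "1 \<le> real (Suc k) * (u - s)" using k1(1) d(1) by (simp add: field_simps)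
      moreover have "1 \<le> real (Suc k) * (t - u)" using k1(2) d(2) by (simp add: field_simps)
      ultimately have "\<phi> k u = 1" unfolding \<phi>_def by simp
      then show "of_real (\<phi> k u) * hh u = G u" using True by (simp add: G_def)
    qed
    then show ?thesis by (rule tendsto_eventually)
  next
    case False
    then have "u \<le> s \<or> t \<le> u" by auto
    then have "\<phi> k u = 0" for k
    proof
      assume "u \<le> s"
      then have "real (Suc k) * (u - s) \<le> 0" by (intro mult_nonneg_nonpos) auto
      then show ?thesis unfolding \<phi>_def by (rule mm0)
    next
      assume "t \<le> u"
      then have "real (Suc k) * (t - u) \<le> 0" by (intro mult_nonneg_nonpos) auto
      then show ?thesis unfolding \<phi>_def by (rule mm1)
    qed
    then show ?thesis using False by (auto simp: G_def)
  qed
  have dc: "(\<lambda>k. integral {0..a} (\<lambda>u. of_real (\<phi> k u) * hh u)) \<longlonglongrightarrow> integral {0..a} G"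
  proof (rule dominated_convergence(2)[OF _ nhi _ lim])
    show "(\<lambda>u. of_real (\<phi> k u) * hh u) integrable_on {0..a}" for k
      by (intro ai_integrable hh_mult_ai continuous_intros phic)
    show "norm (of_real (\<phi> k u) * hh u) \<le> norm (hh u)" for k u
      using phib[of k u] by (simp add: norm_mult mult_left_le_one_le)
  qed
  then have "integral {0..a} G = 0" using z by (simp add: LIMSEQ_const_iff)
  moreover have "integral {0..a} G = integral ({s<..<t} \<inter> {0..a}) hh"
    unfolding G_def by (rule integral_restrict_Int)
  moreover have "{s<..<t} \<inter> {0..a} = box s t" using st by auto
  moreover have "integral (box s t) hh = integral {s..t} hh"
    using integral_open_interval[of s t hh] by simp
  ultimately show ?thesis by simp
qed

lemma hh_negligible0: "negligible {u \<in> {0..a}. hh u \<noteq> 0}"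
proof -
  define H0 where "H0 u = (if u \<in> {0..a} then hh u else 0)" for u
  have hi: "hh integrable_on {0..a}" using hh_ai by (rule ai_integrable)
  then have "H0 integrable_on UNIV" unfolding H0_def by (subst integrable_restrict_UNIV)
  then have H0i: "H0 integrable_on cbox x y" for x y :: real
    by (rule integrable_on_subcbox) simp
  have H0z: "integral (cbox x (x + e *\<^sub>R One)) H0 = 0" if "e > 0" for x e :: real
  proof -
    have cb: "cbox x (x + e *\<^sub>R One) = {x..x+e}" by simp
    have "integral {x..x+e} H0 = integral ({0..a} \<inter> {x..x+e}) hh"
      unfolding H0_def by (rule integral_restrict_Int)
    then have "integral (cbox x (x + e *\<^sub>R One)) H0 = integral ({0..a} \<inter> {x..x+e}) hh"
      by (simp only: cb)
    also have "{0..a} \<inter> {x..x+e} = {max 0 x..min a (x+e)}" by auto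
    also have "integral \<dots> hh = 0"
    proof (cases "max 0 x \<le> min a (x+e)")
      case True then show ?thesis by (intro hh_interval_zero) auto
    next
      case False then show ?thesis by simp
    qed
    finally show ?thesis .
  qed
  obtain N where N: "negligible N"
    "\<And>x e. \<lbrakk>x \<notin> N; 0 < e\<rbrakk> \<Longrightarrow> \<exists>d>0. \<forall>h. 0 < h \<and> h < d \<longrightarrow>
        norm (integral (cbox x (x + h *\<^sub>R One)) H0 /\<^sub>R h ^ DIM(real) - H0 x) < e"
    using integrable_ccontinuous_explicit[of H0] H0i by blast
  have "{u \<in> {0..a}. hh u \<noteq> 0} \<subseteq> N"
  proof
    fix u assume u: "u \<in> {u \<in> {0..a}. hh u \<noteq> 0}"
    show "u \<in> N"
    proof (rule ccontr)
      assume "u \<notin> N"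
      have "norm (H0 u) < e" if e: "e > 0" for e
      proof -
        obtain d where d: "d > 0" "\<forall>h. 0 < h \<and> h < d \<longrightarrow>
            norm (integral (cbox u (u + h *\<^sub>R One)) H0 /\<^sub>R h ^ DIM(real) - H0 u) < e"
          using N(2)[OF \<open>u \<notin> N\<close> e] by blast
        then show ?thesis using d(2)[rule_format, of "d/2"] H0z[of "d/2" u] d(1) by simp
      qed
      then have "H0 u = 0" by (metis norm_le_zero_iff not_less order_refl zero_less_norm_iff)
      then show False using u by (simp add: H0_def)
    qed
  qed
  then show ?thesis using N(1) negligible_subset by blast
qed

lemma hh_period_int: "hh (t + of_int k * a) = hh t"
proof -
  have p1: "hh (t + a) = hh t" for t unfolding hh_def by (simp add: periodic g_period)
  have pn: "hh (t + of_nat n * a) = hh t" for n t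
  proof (induction n arbitrary: t)
    case 0 then show ?case by simp
  next
    case (Suc n)
    have e: "t + of_nat (Suc n) * a = (t + of_nat n * a) + a" by (simp add: distrib_right)
    show ?case unfolding e p1 by (rule Suc.IH)
  qed
  show ?thesis
  proof (cases "k \<ge> 0")
    case True
    obtain n where n: "k = int n" using True nonneg_int_cases by blast
    have e: "of_int k * a = of_nat n * a" using n by simp
    show ?thesis unfolding e by (rule pn)
  next
    case False
    define n where "n = nat (-k)"
    have "k = - int n" using False by (simp add: n_def)
    then have kn: "t + of_int k * a = t - of_nat n * a" by simp
    have "hh ((t - of_nat n * a) + of_nat n * a) = hh (t - of_nat n * a)" by (rule pn)
    then show ?thesis unfolding kn by simp
  qed
qed

lemma f_eq_g_ae: "negligible {u. f u \<noteq> g u}"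
proof -
  define N0 where "N0 = {u \<in> {0..a}. hh u \<noteq> 0}"
  have sub: "{u. f u \<noteq> g u} \<subseteq> \<Union> (range (\<lambda>k::int. (+) (of_int k * a) ` N0))"
  proof
    fix u assume "u \<in> {u. f u \<noteq> g u}"
    then have hu: "hh u \<noteq> 0" by (simp add: hh_def)
    define k where "k = \<lfloor>u / a\<rfloor>"
    define v where "v = u - of_int k * a"
    have k1: "of_int k * a \<le> u" unfolding k_def by (rule floor_divide_lower[OF a_pos])
    have k2: "u < (of_int k + 1) * a" unfolding k_def by (rule floor_divide_upper[OF a_pos])
    have v: "0 \<le> v" "v \<le> a" using k1 k2 unfolding v_def by (simp_all add: algebra_simps)
    have "hh v = hh u" using hh_period_int[of v k] by (simp add: v_def)
    then have "v \<in> N0" using v hu by (simp add: N0_def)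
    moreover have "u = of_int k * a + v" by (simp add: v_def)
    ultimately show "u \<in> \<Union> (range (\<lambda>k::int. (+) (of_int k * a) ` N0))" by blast
  qed
  have n0: "negligible N0" unfolding N0_def by (rule hh_negligible0)
  have U: "negligible (\<Union> (range (\<lambda>k::int. (+) (of_int k * a) ` N0)))"
  proof (rule negligible_countable_Union)
    show "countable (range (\<lambda>k::int. (+) (of_int k * a) ` N0))" by simp
    fix S assume "S \<in> range (\<lambda>k::int. (+) (of_int k * a) ` N0)"
    then obtain k :: int where "S = (+) (of_int k * a) ` N0" by blast
    then show "negligible S" using negligible_translation[OF n0] by simp
  qed
  show ?thesis by (rule negligible_subset[OF U sub])
qed


definition kk :: "nat \<Rightarrow> complex" where
  "kk m = \<xi> + complex_of_real (2 * pi * of_int (int_decode m) / a)"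

lemma delta_bound: "\<exists>\<delta>>0. \<forall>n::int. norm (\<xi> + complex_of_real (2 * pi * of_int n / a)) \<ge> \<delta>"
proof -
  define z where "z = complex_of_real a * \<xi> / (2 * complex_of_real pi)"
  have eq: "\<xi> + complex_of_real (2 * pi * of_int n / a) = of_real (2 * pi / a) * (z + of_int n)" for n :: int
    using a_pos by (simp add: z_def field_simps)
  have nz: "z + of_int n \<noteq> 0" for n :: int
  proof
    assume "z + of_int n = 0"
    then have "z = of_int (-n)" by (simp add: add_eq_0_iff)
    then show False using xi_nonres unfolding z_def by (metis Ints_of_int)
  qed
  define D where "D = {n::int. norm (z + of_int n) < 1}"
  have "D \<subseteq> {-(\<lceil>norm z\<rceil> + 1) .. \<lceil>norm z\<rceil> + 1}"
  proof
    fix n assume "n \<in> D"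
    then have "norm (z + of_int n) < 1" by (simp add: D_def)
    moreover have "norm (of_int n :: complex) \<le> norm (z + of_int n) + norm z"
      by (metis add_diff_cancel_left' norm_triangle_ineq4 add.commute)
    ultimately have "\<bar>real_of_int n\<bar> < 1 + norm z" by simp
    moreover have "norm z \<le> real_of_int \<lceil>norm z\<rceil>" by linarith
    ultimately have "\<bar>real_of_int n\<bar> < real_of_int \<lceil>norm z\<rceil> + 1" by linarith
    then have "real_of_int \<bar>n\<bar> < real_of_int (\<lceil>norm z\<rceil> + 1)" by simp
    then have "\<bar>n\<bar> < \<lceil>norm z\<rceil> + 1" by (simp only: of_int_less_iff)
    then show "n \<in> {-(\<lceil>norm z\<rceil> + 1) .. \<lceil>norm z\<rceil> + 1}" by auto
  qed
  then have fD: "finite D" using finite_subset by blast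
  define \<delta>0 where "\<delta>0 = Min (insert 1 ((\<lambda>n. norm (z + of_int n)) ` D))"
  have d0: "\<delta>0 > 0" unfolding \<delta>0_def using fD nz by (subst Min_gr_iff) auto
  have d1: "\<delta>0 \<le> norm (z + of_int n)" for n :: int
  proof (cases "n \<in> D")
    case True then show ?thesis unfolding \<delta>0_def using fD by (intro Min_le) auto
  next
    case False
    then have "1 \<le> norm (z + of_int n)" by (simp add: D_def)
    moreover have "\<delta>0 \<le> 1" unfolding \<delta>0_def using fD by (intro Min_le) auto
    ultimately show ?thesis by simp
  qed
  show ?thesis
  proof (intro exI[of _ "2 * pi / a * \<delta>0"] conjI allI)
    show "2 * pi / a * \<delta>0 > 0" using a_pos d0 by simp
    fix n :: int
    have "norm (\<xi> + complex_of_real (2 * pi * of_int n / a)) = 2 * pi / a * norm (z + of_int n)"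
      unfolding eq norm_mult norm_of_real using a_pos by simp
    then show "norm (\<xi> + complex_of_real (2 * pi * of_int n / a)) \<ge> 2 * pi / a * \<delta>0"
      using d1[of n] a_pos by (simp add: divide_right_mono)
  qed
qed

definition \<delta> where "\<delta> = (SOME \<delta>. \<delta> > 0 \<and> (\<forall>n::int. norm (\<xi> + complex_of_real (2 * pi * of_int n / a)) \<ge> \<delta>))"

lemma delta: "\<delta> > 0" "norm (kk m) \<ge> \<delta>"
proof -
  have "\<delta> > 0 \<and> (\<forall>n::int. norm (\<xi> + complex_of_real (2 * pi * of_int n / a)) \<ge> \<delta>)"
    unfolding \<delta>_def using delta_bound by (rule someI_ex) 
  then show "\<delta> > 0" "norm (kk m) \<ge> \<delta>" by (auto simp: kk_def)
qed

lemma kk_nz: "kk m \<noteq> 0" using delta(1) delta(2)[of m] by auto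

definition B :: "nat \<Rightarrow> real" where "B m = norm (c m) / norm (kk m)"

lemma summable_B: "summable B"
proof (rule summable_comparison_test[OF _ summable_mult2[OF summable_c, of "1/\<delta>"]])
  show "\<exists>N. \<forall>n\<ge>N. norm (B n) \<le> norm (c n) * (1 / \<delta>)"
  proof (intro exI allI impI)
    fix n
    have "norm (c n) / norm (kk n) \<le> norm (c n) / \<delta>"
      using delta(1) delta(2)[of n] by (intro divide_left_mono) (auto intro!: mult_pos_pos)
    then show "norm (B n) \<le> norm (c n) * (1 / \<delta>)" by (simp add: B_def)
  qed
qed

lemma B_nonneg: "B m \<ge> 0" by (simp add: B_def)

definition S :: real where "S = suminf B"

lemma S_nonneg: "S \<ge> 0" unfolding S_def using summable_B B_nonneg by (simp add: suminf_nonneg)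

lemma S_eq: "S = (\<Sum>\<^sub>\<infinity>n\<in>(UNIV :: int set).
              norm (fourier_coeff a f n) / norm (\<xi> + complex_of_real (2 * pi * of_int n / a)))"
proof -
  have "B summable_on UNIV" using summable_B B_nonneg by (subst summable_on_UNIV_nonneg_real_iff) auto
  then have "(B has_sum infsum B UNIV) UNIV" by (rule has_sum_infsum)
  then have "B sums infsum B UNIV" by (rule has_sum_imp_sums)
  then have "S = infsum B UNIV" unfolding S_def by (rule sums_unique[symmetric])
  also have "\<dots> = (\<Sum>\<^sub>\<infinity>n\<in>(UNIV :: int set).
              norm (fourier_coeff a f n) / norm (\<xi> + complex_of_real (2 * pi * of_int n / a)))"
    unfolding B_def c_def kk_def
    by (rule infsum_reindex_bij_betw[of int_decode UNIV UNIV "\<lambda>n. norm (fourier_coeff a f n) / norm (\<xi> + complex_of_real (2 * pi * of_int n / a))"])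
       (simp add: bij_int_decode)
  finally show ?thesis .
qed

lemma exp_ee: "exp (\<i> * \<xi> * of_real u) * ee a (int_decode m) u = exp (\<i> * kk m * of_real u)"
proof -
  have r: "complex_of_real (2 * pi * of_int n * u / a) = complex_of_real (2 * pi * of_int n / a) * of_real u" for n :: int
    by (simp only: of_real_mult[symmetric]) simp
  show ?thesis unfolding ee_def kk_def exp_add[symmetric] r
    by (simp only: distrib_left distrib_right mult.assoc)
qed

lemma norm_exp_kk: "norm (exp (\<i> * kk m * of_real u)) = exp (- Im \<xi> * u)"
  by (simp add: norm_exp_eq_Re kk_def)


lemma exp_lin_deriv:
  fixes k w :: complex
  assumes "k \<noteq> 0"
  shows "((\<lambda>u. w * exp (\<i> * k * of_real u) / (\<i> * k)) has_vector_derivative w * exp (\<i> * k * of_real u)) (at u within T)"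
proof -
  have "((\<lambda>z. w * exp (\<i> * k * z) / (\<i> * k)) has_field_derivative w * exp (\<i> * k * of_real u)) (at (of_real u))"
    using assms by (auto intro!: derivative_eq_intros simp: field_simps)
  from has_vector_derivative_real_field[OF this, of T] show ?thesis by simp
qed

definition Gs :: "real \<Rightarrow> complex" where
  "Gs t = (\<Sum>m. c m * exp (\<i> * kk m * of_real t) / (\<i> * kk m))"

lemma norm_Gs_term: "norm (c m * exp (\<i> * kk m * of_real t) / (\<i> * kk m)) = exp (- Im \<xi> * t) * B m"
  unfolding B_def norm_divide norm_mult norm_exp_kk by simp

lemma summable_Gs_norm: "summable (\<lambda>m. norm (c m * exp (\<i> * kk m * of_real t) / (\<i> * kk m)))"
  unfolding norm_Gs_term by (rule summable_mult[OF summable_B])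

lemma summable_Gs: "summable (\<lambda>m. c m * exp (\<i> * kk m * of_real t) / (\<i> * kk m))"
  by (rule summable_norm_cancel[OF summable_Gs_norm])

lemma norm_Gs: "norm (Gs t) \<le> exp (- Im \<xi> * t) * S"
proof -
  have "norm (Gs t) \<le> (\<Sum>m. norm (c m * exp (\<i> * kk m * of_real t) / (\<i> * kk m)))"
    unfolding Gs_def by (rule summable_norm[OF summable_Gs_norm])
  also have "\<dots> = exp (- Im \<xi> * t) * S"
    unfolding norm_Gs_term S_def by (rule suminf_mult[OF summable_B])
  finally show ?thesis .
qed

lemma exp_g_series: "exp (\<i> * \<xi> * of_real u) * g u = (\<Sum>m. c m * exp (\<i> * kk m * of_real u))"
proof -
  have "exp (\<i> * \<xi> * of_real u) * g u = (\<Sum>m. exp (\<i> * \<xi> * of_real u) * (c m * ee a (int_decode m) u))"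
    unfolding g_def by (rule suminf_mult[OF summable_g, symmetric])
  also have "\<dots> = (\<Sum>m. c m * exp (\<i> * kk m * of_real u))"
    by (rule suminf_cong) (metis exp_ee mult.left_commute)
  finally show ?thesis .
qed

lemma int_exp_g:
  assumes t: "t \<ge> 0"
  shows "integral {0..t} (\<lambda>u. exp (\<i> * \<xi> * of_real u) * g u) = Gs t - Gs 0"
proof -
  define F where "F m u = c m * exp (\<i> * kk m * of_real u)" for m u
  have nF: "norm (F m u) \<le> norm (c m)" if "u \<in> {0..t}" for m u
  proof -
    have "exp (- Im \<xi> * u) \<le> 1" using that xi_upper by (simp add: mult_nonneg_nonneg)
    then show ?thesis unfolding F_def norm_mult norm_exp_kk
      by (simp add: mult_left_le)
  qed
  have sm: "(\<lambda>m. integral {0..t} (F m)) sums integral {0..t} (\<lambda>u. \<Sum>m. F m u)"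
    by (rule series_has_integral(1)[OF summable_c t nF]) (auto simp: F_def intro!: continuous_intros)
  have iF: "integral {0..t} (F m) = c m * exp (\<i> * kk m * of_real t) / (\<i> * kk m) - c m * exp (\<i> * kk m * of_real 0) / (\<i> * kk m)" for m
  proof (rule integral_unique, rule fundamental_theorem_of_calculus)
    show "0 \<le> t" by (rule t)
    fix u assume "u \<in> {0..t}"
    show "((\<lambda>u. c m * exp (\<i> * kk m * of_real u) / (\<i> * kk m)) has_vector_derivative F m u) (at u within {0..t})"
      unfolding F_def by (rule exp_lin_deriv[OF kk_nz])
  qed
  have D: "(\<lambda>m. c m * exp (\<i> * kk m * of_real t) / (\<i> * kk m) - c m * exp (\<i> * kk m * of_real 0) / (\<i> * kk m)) sums (Gs t - Gs 0)"
    unfolding Gs_def by (intro sums_diff summable_sums summable_Gs)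
  have sm': "(\<lambda>m. c m * exp (\<i> * kk m * of_real t) / (\<i> * kk m) - c m * exp (\<i> * kk m * of_real 0) / (\<i> * kk m)) sums integral {0..t} (\<lambda>u. \<Sum>m. F m u)"
    using sm unfolding iF .
  have e: "integral {0..t} (\<lambda>u. exp (\<i> * \<xi> * of_real u) * g u) = integral {0..t} (\<lambda>u. \<Sum>m. F m u)"
    unfolding F_def exp_g_series ..
  show ?thesis unfolding e by (rule sums_unique2[OF sm' D])
qed


lemma w_deriv:
  assumes "t > -1"
  shows "((\<lambda>t. (t + 1) powr (-\<gamma>)) has_real_derivative (- \<gamma> * (t + 1) powr (-\<gamma> - 1))) (at t)"
  using assms by (auto intro!: derivative_eq_intros simp: powr_diff)

lemma main:
  assumes x: "x \<ge> 0"
  shows "\<exists>I. has_improper_integral_from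
              (\<lambda>t. exp (\<i> * \<xi> * complex_of_real t) * f t / complex_of_real ((t + 1) powr \<gamma>)) x I
           \<and> norm (exp (- \<i> * \<xi> * complex_of_real x) * I) \<le> 2 * S * ((x + 1) powr (-\<gamma>))"
proof -
  define \<Phi> where "\<Phi> t = exp (\<i> * \<xi> * of_real t) * g t" for t
  define GG where "GG t = Gs 0 + integral {0..t} \<Phi>" for t
  define w where "w t = (t + 1) powr (-\<gamma>)" for t :: real
  define w' where "w' t = - \<gamma> * (t + 1) powr (-\<gamma> - 1)" for t :: real
  define R where "R T = integral {x..T} (\<lambda>t. GG t * of_real (w' t))" for T
  define tgt where "tgt t = exp (\<i> * \<xi> * complex_of_real t) * f t / complex_of_real ((t + 1) powr \<gamma>)" for t
  define E where "E = exp (- Im \<xi> * x)"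
  have g0: "\<gamma> > 0" using gamma by simp
  have \<Phi>c: "continuous_on A \<Phi>" for A unfolding \<Phi>_def by (intro continuous_intros continuous_g)
  have GGeq: "GG t = Gs t" if "t \<ge> 0" for t
    unfolding GG_def \<Phi>_def using int_exp_g[OF that] by simp
  have nGG: "norm (GG t) \<le> E * S" if "t \<ge> x" for t
  proof -
    have "norm (GG t) \<le> exp (- Im \<xi> * t) * S" using GGeq[of t] that x norm_Gs[of t] by simp
    also have "\<dots> \<le> E * S" unfolding E_def using that xi_upper S_nonneg
      by (intro mult_right_mono) (auto intro: mult_left_mono)
    finally show ?thesis .
  qed
  have E0: "E > 0" "E \<le> 1" unfolding E_def using x xi_upper by (auto simp: mult_nonneg_nonneg)
  have GGc: "continuous_on {x..T} GG" if "x \<le> T" for T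
  proof -
    have "continuous_on {0..T} (\<lambda>t. integral {0..t} \<Phi>)"
      by (rule indefinite_integral_continuous_1) (rule integrable_continuous_interval[OF \<Phi>c])
    then have "continuous_on {0..T} GG" unfolding GG_def by (intro continuous_intros)
    then show ?thesis by (rule continuous_on_subset) (use x in auto)
  qed
  have GGd: "(GG has_vector_derivative \<Phi> t) (at t)" if "0 < t" "t < T" for t T
  proof -
    have "((\<lambda>u. integral {0..u} \<Phi>) has_vector_derivative \<Phi> t) (at t within {0..T})"
      by (rule integral_has_vector_derivative[OF \<Phi>c]) (use that in auto)
    then have "((\<lambda>u. integral {0..u} \<Phi>) has_vector_derivative \<Phi> t) (at t)"
      using at_within_Icc_at[of 0 t T] that by simp
    then show ?thesis unfolding GG_def
      using has_vector_derivative_add[OF has_vector_derivative_const[of "Gs 0"]] by fastforce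
  qed
  have wd: "((\<lambda>t. complex_of_real (w t)) has_vector_derivative complex_of_real (w' t)) (at t)" if "t \<ge> 0" for t
    unfolding w_def w'_def by (rule has_vector_derivative_of_real, rule w_deriv) (use that in simp)
  have wc: "continuous_on {x..T} (\<lambda>t. complex_of_real (w t))" for T
    unfolding w_def using x by (intro continuous_intros) auto
  have w'c: "continuous_on {x..T} (\<lambda>t. complex_of_real (w' t))" for T
    unfolding w'_def using x by (intro continuous_intros) auto
  have w_pos: "w t > 0" if "t \<ge> x" for t unfolding w_def using that x by simp
  have w_mono: "w T \<le> w t" if "x \<le> t" "t \<le> T" for t T
    unfolding w_def by (rule powr_mono2') (use that x g0 in auto)
  have w_lim: "(w \<longlongrightarrow> 0) at_top"
    unfolding w_def
    by (rule tendsto_neg_powr) (use g0 in \<open>auto intro!: filterlim_tendsto_add_at_top[OF tendsto_const filterlim_ident, of 1, simplified add.commute]\<close>)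
  have nw': "norm (complex_of_real (w' t)) = - w' t" if "t \<ge> 0" for t
    unfolding w'_def using that g0 by (simp only: norm_of_real) simp
  have Rint: "(\<lambda>t. GG t * complex_of_real (w' t)) integrable_on {x..T}" if "x \<le> T" for T
    by (rule integrable_continuous_interval, rule continuous_on_mult[OF GGc[OF that] w'c])
  have iw': "((\<lambda>t. - w' t) has_integral (w t0 - w T)) {t0..T}" if "x \<le> t0" "t0 \<le> T" for t0 T
  proof -
    have "((\<lambda>t. - w' t) has_integral ((- w T) - (- w t0))) {t0..T}"
    proof (rule fundamental_theorem_of_calculus)
      show "t0 \<le> T" by (rule that)
      fix t assume t: "t \<in> {t0..T}"
      have "t > -1" using t that x by auto
      then have "((\<lambda>t. (t + 1) powr (-\<gamma>)) has_real_derivative (- \<gamma> * (t + 1) powr (-\<gamma> - 1))) (at t)"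
        by (rule w_deriv)
      then have "((\<lambda>t. - w t) has_real_derivative - w' t) (at t)"
        unfolding w_def w'_def by (rule DERIV_minus)
      then have "((\<lambda>t. - w t) has_real_derivative - w' t) (at t within {t0..T})"
        by (rule has_field_derivative_at_within)
      then show "((\<lambda>t. - w t) has_vector_derivative - w' t) (at t within {t0..T})"
        by (simp add: has_real_derivative_iff_has_vector_derivative)
    qed
    then show ?thesis by simp
  qed
  have Rb: "norm (integral {t0..T} (\<lambda>t. GG t * of_real (w' t))) \<le> E * S * (w t0 - w T)"
    if "x \<le> t0" "t0 \<le> T" for t0 T
  proof -
    have "norm (integral {t0..T} (\<lambda>t. GG t * of_real (w' t))) \<le> integral {t0..T} (\<lambda>t. E * S * (- w' t))"
    proof (rule integral_norm_bound_integral)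
      show "(\<lambda>t. GG t * complex_of_real (w' t)) integrable_on {t0..T}"
      proof -
        have xT: "x \<le> T" using that by simp
        show ?thesis using integrable_on_subinterval[OF Rint[OF xT], of t0 T] that by auto
      qed
      show "(\<lambda>t. E * S * - w' t) integrable_on {t0..T}"
        using integrable_on_cmult_left[OF has_integral_integrable[OF iw'[OF that]], of "E * S"] by simp
      fix t assume t: "t \<in> {t0..T}"
      have "norm (GG t * complex_of_real (w' t)) = norm (GG t) * (- w' t)"
        using nw'[of t] t that x by (simp add: norm_mult)
      also have "\<dots> \<le> E * S * (- w' t)"
        using nGG[of t] t that x g0 by (intro mult_right_mono) (auto simp: w'_def)
      finally show "norm (GG t * complex_of_real (w' t)) \<le> E * S * - w' t" .
    qed
    also have "\<dots> = E * S * (w t0 - w T)"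
      unfolding integral_mult_right integral_unique[OF iw'[OF that]] ..
    finally show ?thesis .
  qed
  have byparts: "(tgt has_integral (GG T * of_real (w T) - GG x * of_real (w x) - R T)) {x..T}"
    if T: "x \<le> T" for T
  proof -
    have "((\<lambda>t. \<Phi> t * complex_of_real (w t)) has_integral (GG T * of_real (w T) - GG x * of_real (w x) - R T)) {x..T}"
    proof (rule integration_by_parts_interior[where prod="(*)" and f=GG and f'=\<Phi> and g="\<lambda>t. complex_of_real (w t)" and g'="\<lambda>t. complex_of_real (w' t)"])
      show "bounded_bilinear ((*) :: complex \<Rightarrow> _)" by (rule bounded_bilinear_mult)
      show "x \<le> T" by (rule T)
      show "continuous_on {x..T} GG" by (rule GGc[OF T])
      show "continuous_on {x..T} (\<lambda>t. complex_of_real (w t))" by (rule wc)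
      show "(GG has_vector_derivative \<Phi> t) (at t)" if "t \<in> {x<..<T}" for t
        by (rule GGd[of t T]) (use that x in auto)
      show "((\<lambda>t. complex_of_real (w t)) has_vector_derivative complex_of_real (w' t)) (at t)" if "t \<in> {x<..<T}" for t
        by (rule wd) (use that x in auto)
      have "((\<lambda>t. GG t * complex_of_real (w' t)) has_integral R T) {x..T}"
        unfolding R_def using Rint[OF T] by (rule integrable_integral)
      then show "((\<lambda>t. GG t * complex_of_real (w' t)) has_integral
          (GG T * complex_of_real (w T) - GG x * complex_of_real (w x) - (GG T * complex_of_real (w T) - GG x * complex_of_real (w x) - R T))) {x..T}"
        by simp
    qed
    then show ?thesis
    proof (rule has_integral_spike[OF f_eq_g_ae, rotated])
      fix t assume "t \<in> {x..T} - {u. f u \<noteq> g u}"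
      then have "f t = g t" by simp
      then show "tgt t = \<Phi> t * complex_of_real (w t)"
        unfolding tgt_def \<Phi>_def w_def by (simp add: powr_minus divide_inverse)
    qed
  qed
  define J where "J T = integral {x..T} tgt" for T
  have Jeq: "J T = GG T * of_real (w T) - GG x * of_real (w x) - R T" if "x \<le> T" for T
    unfolding J_def using byparts[OF that] by (rule integral_unique)
  have nexp: "norm (exp (- \<i> * \<xi> * complex_of_real x)) = exp (Im \<xi> * x)"
    by (simp add: norm_exp_eq_Re)
  have Jb: "norm (exp (- \<i> * \<xi> * complex_of_real x) * J T) \<le> 2 * S * w x" if T: "x \<le> T" for T
  proof -
    have RT: "norm (R T) \<le> E * S * (w x - w T)" unfolding R_def by (rule Rb) (use T in auto)
    have wT: "w T > 0" using w_pos T by simp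
    have wx: "w x > 0" using w_pos by simp
    have n1: "norm (GG T * of_real (w T)) = norm (GG T) * w T" using wT by (simp add: norm_mult)
    have n2: "norm (GG x * of_real (w x)) = norm (GG x) * w x" using wx by (simp add: norm_mult)
    have "norm (J T) \<le> norm (GG T * of_real (w T) - GG x * of_real (w x)) + norm (R T)"
      unfolding Jeq[OF T] by (rule norm_triangle_ineq4)
    also have "\<dots> \<le> (norm (GG T * of_real (w T)) + norm (GG x * of_real (w x))) + norm (R T)"
      by (intro add_right_mono norm_triangle_ineq4)
    finally have "norm (J T) \<le> norm (GG T) * w T + norm (GG x) * w x + norm (R T)"
      unfolding n1 n2 .
    also have "\<dots> \<le> E * S * w T + E * S * w x + E * S * (w x - w T)"
      using nGG[of T] nGG[of x] T RT wT wx
      by (intro add_mono mult_right_mono) auto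
    also have "\<dots> = 2 * E * S * w x" by (simp add: algebra_simps)
    finally have nJ: "norm (J T) \<le> 2 * E * S * w x" .
    have "norm (exp (- \<i> * \<xi> * complex_of_real x) * J T) = exp (Im \<xi> * x) * norm (J T)"
      by (simp add: norm_mult nexp)
    also have "\<dots> \<le> exp (Im \<xi> * x) * (2 * E * S * w x)" using nJ by (intro mult_left_mono) auto
    also have "\<dots> = 2 * S * w x" unfolding E_def by (simp add: exp_minus field_simps)
    finally show ?thesis .
  qed
  have "cauchy_filter (filtermap R at_top)"
    unfolding cauchy_filter_metric_filtermap
  proof (intro allI impI)
    fix e :: real assume e: "e > 0"
    have "((\<lambda>T. E * S * w T) \<longlongrightarrow> 0) at_top" using tendsto_mult_left[OF w_lim, of "E * S"] by simp
    then have "eventually (\<lambda>T. E * S * w T < e) at_top" using e by (rule order_tendstoD(2))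
    then obtain T0 where T0: "\<And>T. T \<ge> T0 \<Longrightarrow> E * S * w T < e"
      by (auto simp: eventually_at_top_linorder)
    define T1 where "T1 = max T0 x"
    have key: "dist (R T2) (R T3) < e" if "T1 \<le> T2" "T2 \<le> T3" for T2 T3
    proof -
      have xT3: "x \<le> T3" "x \<le> T2" using that by (auto simp: T1_def)
      have "R T3 = R T2 + integral {T2..T3} (\<lambda>t. GG t * of_real (w' t))"
        unfolding R_def using Henstock_Kurzweil_Integration.integral_combine[OF xT3(2) that(2) Rint[OF xT3(1)]]
        by simp
      then have "dist (R T2) (R T3) = norm (integral {T2..T3} (\<lambda>t. GG t * of_real (w' t)))"
        by (simp add: dist_norm norm_minus_commute)
      also have "\<dots> \<le> E * S * (w T2 - w T3)" by (rule Rb) (use that in \<open>auto simp: T1_def\<close>)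
      also have "\<dots> \<le> E * S * w T2" using w_pos[OF xT3(1)] E0 S_nonneg
        by (intro mult_left_mono) auto
      also have "\<dots> < e" by (rule T0) (use that in \<open>auto simp: T1_def\<close>)
      finally show ?thesis .
    qed
    show "\<exists>P. eventually P at_top \<and> (\<forall>T2 T3. P T2 \<and> P T3 \<longrightarrow> dist (R T2) (R T3) < e)"
    proof (intro exI[of _ "\<lambda>T. T \<ge> T1"] conjI allI impI)
      show "eventually (\<lambda>T. T \<ge> T1) at_top" by (rule eventually_ge_at_top)
      fix T2 T3 assume "T1 \<le> T2 \<and> T1 \<le> T3"
      then show "dist (R T2) (R T3) < e"
        using key[of T2 T3] key[of T3 T2] by (cases "T2 \<le> T3") (auto simp: dist_commute)
    qed
  qed
  then obtain L where L: "filtermap R at_top \<le> nhds L"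
    using cauchy_filter_complete_converges[of "filtermap R at_top" UNIV] complete_UNIV
    by (auto simp: filtermap_bot_iff)
  then have RL: "(R \<longlongrightarrow> L) at_top" by (simp add: filterlim_def)
  have GW: "((\<lambda>T. GG T * of_real (w T)) \<longlongrightarrow> 0) at_top"
  proof (rule Lim_null_comparison)
    show "eventually (\<lambda>T. norm (GG T * of_real (w T)) \<le> E * S * w T) at_top"
      using eventually_ge_at_top[of x]
    proof eventually_elim
      case (elim T)
      then show ?case using nGG[of T] w_pos[of T] by (simp add: norm_mult mult_right_mono)
    qed
    show "((\<lambda>T. E * S * w T) \<longlongrightarrow> 0) at_top" using tendsto_mult_left[OF w_lim, of "E * S"] by simp
  qed
  define I where "I = 0 - GG x * of_real (w x) - L"
  have JI: "(J \<longlongrightarrow> I) at_top"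
  proof -
    have "((\<lambda>T. GG T * of_real (w T) - GG x * of_real (w x) - R T) \<longlongrightarrow> I) at_top"
      unfolding I_def by (intro tendsto_diff GW tendsto_const RL)
    then show ?thesis
    proof (rule Lim_transform_eventually)
      show "\<forall>\<^sub>F T in at_top. GG T * complex_of_real (w T) - GG x * complex_of_real (w x) - R T = J T"
        using eventually_ge_at_top[of x] by eventually_elim (simp add: Jeq)
    qed
  qed
  have "has_improper_integral_from tgt x I"
    unfolding has_improper_integral_from_def
  proof (intro conjI allI impI)
    show "tgt integrable_on {x..T}" if "x \<le> T" for T using byparts[OF that] by blast
    show "((\<lambda>T. integral {x..T} tgt) \<longlongrightarrow> I) at_top" using JI unfolding J_def .
  qed
  moreover have "norm (exp (- \<i> * \<xi> * complex_of_real x) * I) \<le> 2 * S * w x"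
  proof (rule tendsto_le[OF trivial_limit_at_top_linorder tendsto_const])
    show "((\<lambda>T. norm (exp (- \<i> * \<xi> * complex_of_real x) * J T)) \<longlongrightarrow> norm (exp (- \<i> * \<xi> * complex_of_real x) * I)) at_top"
      by (intro tendsto_norm tendsto_mult tendsto_const JI)
    show "eventually (\<lambda>T. norm (exp (- \<i> * \<xi> * complex_of_real x) * J T) \<le> 2 * S * w x) at_top"
      using eventually_ge_at_top[of x] by eventually_elim (rule Jb)
  qed
  ultimately show ?thesis unfolding tgt_def w_def by blast
qed

end

theorem lemma3p2:
  fixes a \<gamma> :: real and f :: "real \<Rightarrow> complex" and \<xi> :: complex
  assumes a_pos: "a > 0"
    and gamma: "1/2 < \<gamma>" "\<gamma> \<le> 1"
    and periodic: "\<And>t. f (t + a) = f t"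
    and L1: "f absolutely_integrable_on {0..a}"
    and l1_coeffs: "(\<lambda>n. norm (fourier_coeff a f n)) summable_on (UNIV :: int set)"
    and xi_upper: "Im \<xi> \<ge> 0"
    and xi_nonres: "complex_of_real a * \<xi> / (2 * complex_of_real pi) \<notin> \<int>"
  shows "\<forall>x\<ge>0. \<exists>I. has_improper_integral_from
              (\<lambda>t. exp (\<i> * \<xi> * complex_of_real t) * f t / complex_of_real ((t + 1) powr \<gamma>)) x I
           \<and> norm (exp (- \<i> * \<xi> * complex_of_real x) * I)
               \<le> 2 * (\<Sum>\<^sub>\<infinity>n\<in>(UNIV :: int set).
                        norm (fourier_coeff a f n) / norm (\<xi> + complex_of_real (2 * pi * of_int n / a)))
                   * (1 / (x + 1) powr \<gamma>)"
proof (intro allI impI)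
  fix x :: real assume x: "x \<ge> 0"
  interpret L: L32 a \<gamma> f \<xi>
    by (unfold_locales; fact assms)
  obtain I where I: "has_improper_integral_from
              (\<lambda>t. exp (\<i> * \<xi> * complex_of_real t) * f t / complex_of_real ((t + 1) powr \<gamma>)) x I"
     "norm (exp (- \<i> * \<xi> * complex_of_real x) * I) \<le> 2 * L.S * ((x + 1) powr (-\<gamma>))"
    using L.main[OF x] by blast
  have e: "2 * L.S * ((x + 1) powr (-\<gamma>)) = 2 * (\<Sum>\<^sub>\<infinity>n\<in>(UNIV :: int set).
                        norm (fourier_coeff a f n) / norm (\<xi> + complex_of_real (2 * pi * of_int n / a)))
                   * (1 / (x + 1) powr \<gamma>)"
    unfolding L.S_eq powr_minus_divide ..
  show "\<exists>I. has_improper_integral_from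
              (\<lambda>t. exp (\<i> * \<xi> * complex_of_real t) * f t / complex_of_real ((t + 1) powr \<gamma>)) x I
           \<and> norm (exp (- \<i> * \<xi> * complex_of_real x) * I)
               \<le> 2 * (\<Sum>\<^sub>\<infinity>n\<in>(UNIV :: int set).
                        norm (fourier_coeff a f n) / norm (\<xi> + complex_of_real (2 * pi * of_int n / a)))
                   * (1 / (x + 1) powr \<gamma>)"
    using I unfolding e by blast
qed

end
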